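(* Let $n, m \ge 1$, let $\boldsymbol{y} \in \{0,1\}^n$ be a (true) binary label vector, and let $\boldsymbol{w}_1, \ldots, \boldsymbol{w}_m \in [0,1]^n$ be weak signals (non-abstaining, i.e. each labels all $n$ examples). For each $i$, let $\epsilon_i = \frac{1}{n}\left( (\mathbf{1} - 2\boldsymbol{w}_i)^\top \boldsymbol{y} + \boldsymbol{w}_i^\top \mathbf{1}\right)$ be the true expected error rate of $\boldsymbol{w}_i$ with respect to $\boldsymbol{y}$, and set $\boldsymbol{\epsilon} = (\epsilon_1, \ldots, \epsilon_m)^\top$. Let $\boldsymbol{A} \in \mathbb{R}^{m \times n}$ be the matrix whose $i$-th row is $(\mathbf{1} - 2\boldsymbol{w}_i)^\top$, and let $\boldsymbol{c} \in \mathbb{R}^m$ have entries $c_i = n\epsilon_i - \boldsymbol{w}_i^\top \mathbf{1}$ (so that $\boldsymbol{A}\boldsymbol{y} = \boldsymbol{c}$). Then for any $\tilde{\boldsymbol{y}} \in [0,1]^n$ with $\boldsymbol{A}\tilde{\boldsymbol{y}} = \boldsymbol{c}$, $$\|\tilde{\boldsymbol{y}} - (\mathbf{1} - \boldsymbol{y})\| \ge n \,\|\boldsymbol{A}^+ (\mathbf{1} - 2\boldsymbol{\epsilon})\|,$$ where $\|\cdot\|$ is the Euclidean norm and $\boldsymbol{A}^+$ is the Moore–Penrose pseudoinverse of $\boldsymbol{A}$.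
   Context: Setting: binary classification with $n$ unlabeled examples and $m$ weak supervision signals. $\mathbf{1}$ denotes the all-ones vector of the appropriate dimension ($\mathbf{1} \in \mathbb{R}^n$ in $\boldsymbol{w}_i^\top\mathbf{1}$, $\mathbf{1}-\boldsymbol{y}$, and $\mathbf{1} - 2\boldsymbol{w}_i$; $\mathbf{1} \in \mathbb{R}^m$ in $\mathbf{1} - 2\boldsymbol{\epsilon}$). The weak signals may be soft (entries in $[0,1]$) or hard (entries in $\{0,1\}$). The error rate $\epsilon_i$ equals $\frac{1}{n}\left(\boldsymbol{w}_i^\top(\mathbf{1}-\boldsymbol{y}) + (\mathbf{1}-\boldsymbol{w}_i)^\top \boldsymbol{y}\right)$. *)

theory Defs
  imports "HOL-Analysis.Analysis"
begin

text \<open>Moore--Penrose pseudoinverse, defined by the four Penrose conditions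
  (such a matrix exists and is unique for every real matrix).\<close>

definition is_pinv :: "real^'n^'m \<Rightarrow> real^'m^'n \<Rightarrow> bool" where
  "is_pinv A B \<longleftrightarrow>
     A ** B ** A = A \<and> B ** A ** B = B \<and>
     transpose (A ** B) = A ** B \<and> transpose (B ** A) = B ** A"

definition pinv :: "real^'n^'m \<Rightarrow> real^'m^'n" where
  "pinv A = (THE B. is_pinv A B)"

end

theory Submission
  imports Defs
begin


lemma proj_exists:
  fixes U :: "'a::euclidean_space set"
  assumes "subspace U"
  shows "\<exists>P. linear P \<and> (\<forall>x. P x \<in> U) \<and> (\<forall>x. \<forall>u\<in>U. inner (x - P x) u = 0)"
proof -
  obtain B where BU: "B \<subseteq> U" and orth: "pairwise orthogonal B"
    and n1: "\<And>x. x \<in> B \<Longrightarrow> norm x = 1" and ind: "independent B" and sp: "span B = U"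
    using orthonormal_basis_subspace[OF assms] by metis
  have fin: "finite B" using ind independent_imp_finite by blast
  define P where "P x = (\<Sum>b\<in>B. inner x b *\<^sub>R b)" for x
  have lin: "linear P" unfolding P_def
    by (intro linearI) (simp_all add: inner_add_left scaleR_add_left sum.distrib scaleR_sum_right)
  have inU: "P x \<in> U" for x
    unfolding P_def sp[symmetric] by (intro span_sum span_scale span_base) auto
  have ob: "inner (x - P x) b' = 0" if "b' \<in> B" for x b'
  proof -
    have "inner (P x) b' = (\<Sum>b\<in>B. inner x b * inner b b')"
      unfolding P_def by (simp add: inner_sum_left)
    also have "\<dots> = (\<Sum>b\<in>{b'}. inner x b * inner b b')"
      using fin that orth
      by (intro sum.mono_neutral_right) (auto simp: pairwise_def orthogonal_def)
    also have "\<dots> = inner x b'" using n1[OF that] by (simp add: dot_square_norm)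
    finally show ?thesis by (simp add: inner_diff_left)
  qed
  have "\<forall>x. \<forall>u\<in>U. inner (x - P x) u = 0"
    using orthogonal_to_span[of _ B] ob sp unfolding orthogonal_def by blast
  with lin inU show ?thesis by blast
qed

lemma range_subspace: "subspace (range (\<lambda>v. (M::real^'n^'m) *v v))"
  using subspace_UNIV matrix_vector_mul_linear
  by (metis linear_subspace_image)

lemma adj: "inner ((A::real^'n^'m) *v x) v = inner x (transpose A *v v)"
  using dot_lmul_matrix[of v A x] by (simp add: inner_commute)

lemma sym_matrix:
  fixes M :: "real^'n^'n"
  assumes "\<And>x y. inner (M *v x) y = inner x (M *v y)"
  shows "transpose M = M"
proof -
  have "transpose M *v x = M *v x" for x
  proof -
    have "inner (transpose M *v x) y = inner (M *v x) y" for y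
      using assms[of y x] adj[of M y x] by (simp add: inner_commute)
    then show ?thesis using vector_eq_rdot by blast
  qed
  then show ?thesis using matrix_eq by blast
qed

lemma proj_sym:
  fixes P :: "'a::real_inner \<Rightarrow> 'a"
  assumes "\<forall>x. P x \<in> U" "\<forall>x. \<forall>u\<in>U. inner (x - P x) u = 0"
  shows "inner (P x) y = inner x (P y)"
proof -
  have "inner (y - P y) (P x) = 0" "inner (x - P x) (P y) = 0" using assms by auto
  then have "inner (P x) y = inner (P x) (P y)" "inner (P y) x = inner (P y) (P x)"
    by (simp_all add: inner_diff_left inner_diff_right inner_commute)
  then show ?thesis by (metis inner_commute)
qed

lemma pinv_exists: fixes A :: "real^'n^'m" shows "\<exists>B. is_pinv A B"
proof -
  define f where "f x = A *v x" for x
  define S where "S = range (\<lambda>v. transpose A *v v)"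
  define T where "T = range f"
  have sS: "subspace S" unfolding S_def by (rule range_subspace)
  have spS: "span S = S" using sS by (rule span_eq_iff[THEN iffD2])
  have sT: "subspace T" unfolding T_def f_def by (rule range_subspace)
  have linf: "linear f" unfolding f_def by simp
  have K2: "f x = 0" if "\<forall>u\<in>S. inner x u = 0" for x
  proof -
    have "inner (f x) (f x) = inner x (transpose A *v f x)" unfolding f_def by (rule adj)
    also have "\<dots> = 0" using that unfolding S_def by auto
    finally show ?thesis by simp
  qed
  obtain PS where PS: "linear PS" "\<forall>x. PS x \<in> S" "\<forall>x. \<forall>u\<in>S. inner (x - PS x) u = 0"
    using proj_exists[OF sS] by blast
  obtain PT where PT: "linear PT" "\<forall>x. PT x \<in> T" "\<forall>x. \<forall>u\<in>T. inner (x - PT x) u = 0"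
    using proj_exists[OF sT] by blast
  have K3: "f (PS x) = f x" for x
  proof -
    have "f (x - PS x) = 0" using K2 PS(3) by blast
    then show ?thesis unfolding f_def by (simp add: matrix_vector_mult_diff_distrib)
  qed
  have PSid: "PS s = s" if "s \<in> S" for s
  proof -
    have "s - PS s \<in> S" using sS that PS(2) by (simp add: subspace_diff)
    then have "inner (s - PS s) (s - PS s) = 0" using PS(3) by blast
    then show ?thesis by simp
  qed
  have PTid: "PT t = t" if "t \<in> T" for t
  proof -
    have "t - PT t \<in> T" using sT that PT(2) by (simp add: subspace_diff)
    then have "inner (t - PT t) (t - PT t) = 0" using PT(3) by blast
    then show ?thesis by simp
  qed
  have inj: "inj_on f (span S)"
  proof (rule inj_onI)
    fix s1 s2 assume s: "s1 \<in> span S" "s2 \<in> span S" and e: "f s1 = f s2"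
    have d: "s1 - s2 \<in> S" using span_diff[OF s] sS by (metis span_eq_iff)
    have "f (s1 - s2) = 0" using e unfolding f_def by (simp add: matrix_vector_mult_diff_distrib)
    then have "inner (s1 - s2) u = 0" if "u \<in> S" for u
      using that adj[of A "s1 - s2"] unfolding S_def f_def by auto
    then have "inner (s1 - s2) (s1 - s2) = 0" using d by blast
    then show "s1 = s2" by simp
  qed
  obtain g where g: "range g \<subseteq> span S" "linear g" "\<forall>x\<in>span S. g (f x) = x"
    using linear_inj_on_left_inverse[OF linf inj] by blast
  have gS: "g v \<in> S" for v using g(1) unfolding spS by auto
  have gf: "g (f x) = PS x" for x
    using K3[of x] g(3) PS(2) sS by (metis span_eq_iff)
  define h where "h = g \<circ> PT"
  have linh: "linear h" unfolding h_def using g(2) PT(1) by (rule linear_compose[rotated])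
  have hf: "h (f x) = PS x" for x unfolding h_def T_def using PTid gf by (simp add: T_def)
  have fh: "f (h v) = PT v" for v
  proof -
    obtain x where x: "PT v = f x" using PT(2) unfolding T_def by auto
    show ?thesis unfolding h_def using x gf K3 by simp
  qed
  have hS: "h v \<in> S" for v unfolding h_def using gS by simp
  define B where "B = matrix h"
  have Bv: "B *v v = h v" for v unfolding B_def using linh by (simp add: matrix_works)
  have Av: "A *v x = f x" for x by (simp add: f_def)
  have 1: "A ** B ** A = A"
    by (simp add: matrix_eq Av Bv fh hf K3 flip: matrix_vector_mul_assoc)
  have 2: "B ** A ** B = B"
    by (simp add: matrix_eq Av Bv hf PSid hS flip: matrix_vector_mul_assoc)
  have 3: "transpose (A ** B) = A ** B"
    by (rule sym_matrix) (simp add: Av Bv fh proj_sym[OF PT(2,3)] flip: matrix_vector_mul_assoc)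
  have 4: "transpose (B ** A) = B ** A"
    by (rule sym_matrix) (simp add: Av Bv hf proj_sym[OF PS(2,3)] flip: matrix_vector_mul_assoc)
  show ?thesis using 1 2 3 4 unfolding is_pinv_def by blast
qed

lemma pinv_unique:
  fixes A :: "real^'n^'m"
  assumes "is_pinv A B" "is_pinv A C" shows "B = C"
proof -
  have b1: "A ** B ** A = A" and b2: "B ** A ** B = B" and b3: "transpose (A ** B) = A ** B"
    and b4: "transpose (B ** A) = B ** A" using assms(1) unfolding is_pinv_def by auto
  have c1: "A ** C ** A = A" and c2: "C ** A ** C = C" and c3: "transpose (A ** C) = A ** C"
    and c4: "transpose (C ** A) = C ** A" using assms(2) unfolding is_pinv_def by auto
  have tA1: "transpose A = transpose A ** (A ** C)"
    using c1 c3 by (metis matrix_transpose_mul)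
  have tA2: "transpose A = (B ** A) ** transpose A"
    using b1 b4 by (metis matrix_transpose_mul matrix_mul_assoc)
  have "B = B ** (transpose B ** transpose A)"
    using b2 b3 by (metis matrix_transpose_mul matrix_mul_assoc)
  also have "\<dots> = B ** (transpose (A ** B) ** (A ** C))"
    using tA1 by (metis matrix_transpose_mul matrix_mul_assoc)
  also have "\<dots> = B ** A ** C" using b1 b3 by (metis matrix_mul_assoc)
  finally have eB: "B = B ** A ** C" .
  have "C = (transpose A ** transpose C) ** C"
    using c2 c4 by (metis matrix_transpose_mul matrix_mul_assoc)
  also have "\<dots> = ((B ** A) ** transpose (C ** A)) ** C"
    using tA2 by (metis matrix_transpose_mul matrix_mul_assoc)
  also have "\<dots> = B ** A ** C" using c1 c4 by (metis matrix_mul_assoc)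
  finally show ?thesis using eB by simp
qed

lemma pinv_is: "is_pinv A (pinv A)"
  unfolding pinv_def using pinv_exists[of A] pinv_unique[of A]
  by (metis theI)


lemma mvneg: "(A::real^'n^'m) *v (- x) = - (A *v x)"
  by (metis diff_0 matrix_vector_mult_diff_distrib matrix_vector_mult_0_right)

lemma proj_norm:
  fixes M :: "real^'n^'n"
  assumes "transpose M = M" "M ** M = M"
  shows "norm (M *v z) \<le> norm z"
proof -
  have "inner (M *v z) (M *v z) = inner z (transpose M *v (M *v z))" by (rule adj)
  also have "\<dots> = inner z (M *v z)" using assms by (simp add: matrix_vector_mul_assoc)
  also have "\<dots> \<le> norm z * norm (M *v z)" by (rule norm_cauchy_schwarz)
  finally have "norm (M *v z) * norm (M *v z) \<le> norm z * norm (M *v z)"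
    by (simp add: dot_square_norm power2_eq_square)
  then show ?thesis
    by (metis mult_right_le_imp_le norm_ge_zero order.trans mult_le_cancel_right not_le norm_not_less_zero zero_less_norm_iff order_refl)
qed


theorem theorem1:
  fixes y yt :: "real^'n" and w :: "'m::finite \<Rightarrow> real^'n::finite"
    and eps :: "real^'m" and A :: "real^'n^'m" and c :: "real^'m"
  assumes y_bin: "\<forall>j. y $ j \<in> {0, 1}"
    and w_range: "\<forall>i j. 0 \<le> w i $ j \<and> w i $ j \<le> 1"
    and eps_def: "\<forall>i. eps $ i = (1 / real CARD('n)) *
                     (((1::real^'n) - 2 *\<^sub>R w i) \<bullet> y + w i \<bullet> (1::real^'n))"
    and A_def: "A = (\<chi> i. (1::real^'n) - 2 *\<^sub>R w i)"
    and c_def: "\<forall>i. c $ i = real CARD('n) * eps $ i - w i \<bullet> (1::real^'n)"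
    and yt_range: "\<forall>j. 0 \<le> yt $ j \<and> yt $ j \<le> 1"
    and yt_sol: "A *v yt = c"
  shows "norm (yt - ((1::real^'n) - y))
           \<ge> real CARD('n) * norm (pinv A *v ((1::real^'m) - 2 *\<^sub>R eps))"
  proof -
  define N where "N = real CARD('n)"
  have Npos: "N > 0" unfolding N_def by simp
  have one1: "inner (1::real^'n) 1 = N" unfolding N_def by (simp add: inner_vec_def)
  have Av: "(A *v u) $ i = inner ((1::real^'n) - 2 *\<^sub>R w i) u" for u i
    unfolding A_def by (simp add: matrix_vector_mult_def inner_vec_def)
  have Ay: "A *v y = c"
  proof (rule vec_eq_iff[THEN iffD2, OF allI])
    fix i
    show "(A *v y) $ i = c $ i"
      using c_def eps_def Npos unfolding Av N_def by simp
  qed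
  have Ae: "A *v ((1::real^'n) - 2 *\<^sub>R y) = N *\<^sub>R ((1::real^'m) - 2 *\<^sub>R eps)"
  proof (rule vec_eq_iff[THEN iffD2, OF allI])
    fix i
    have "inner ((1::real^'n) - 2 *\<^sub>R w i) (1 - 2 *\<^sub>R y)
        = N - 2 * inner (w i) 1 - 2 * inner ((1::real^'n) - 2 *\<^sub>R w i) y"
      using one1 by (simp add: inner_diff_left inner_diff_right algebra_simps)
    moreover have "N * eps $ i = inner ((1::real^'n) - 2 *\<^sub>R w i) y + inner (w i) 1"
      using eps_def Npos unfolding N_def by simp
    moreover have "(N *\<^sub>R ((1::real^'m) - 2 *\<^sub>R eps)) $ i = N - 2 * (N * eps $ i)"
      by (simp add: algebra_simps)
    ultimately show "(A *v ((1::real^'n) - 2 *\<^sub>R y)) $ i = (N *\<^sub>R ((1::real^'m) - 2 *\<^sub>R eps)) $ i"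
      unfolding Av by linarith
  qed
  define z where "z = yt - ((1::real^'n) - y)"
  have Az: "A *v z = - (N *\<^sub>R ((1::real^'m) - 2 *\<^sub>R eps))"
  proof -
    have "A *v z = A *v yt - A *v 1 + A *v y" unfolding z_def
      by (simp add: matrix_vector_mult_diff_distrib matrix_vector_right_distrib)
    also have "\<dots> = c - A *v 1 + c" using yt_sol Ay by simp
    also have "\<dots> = 2 *\<^sub>R c - A *v 1" by (simp add: scaleR_2)
    also have "\<dots> = - (A *v ((1::real^'n) - 2 *\<^sub>R y))"
      by (simp only: matrix_vector_mult_diff_distrib matrix_vector_mult_scaleR Ay) simp
    finally show ?thesis using Ae by simp
  qed
  have pi: "is_pinv A (pinv A)" by (rule pinv_is)
  let ?M = "pinv A ** A"
  have M1: "transpose ?M = ?M" using pi unfolding is_pinv_def by blast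
  have M2: "?M ** ?M = ?M" using pi unfolding is_pinv_def by (simp add: matrix_mul_assoc)
  have "N * norm (pinv A *v ((1::real^'m) - 2 *\<^sub>R eps))
      = norm (pinv A *v (N *\<^sub>R ((1::real^'m) - 2 *\<^sub>R eps)))"
    using Npos by (simp add: matrix_vector_mult_scaleR)
  also have "\<dots> = norm (?M *v z)"
    by (simp add: Az matrix_vector_mul_assoc[symmetric] mvneg)
  also have "\<dots> \<le> norm z" by (rule proj_norm[OF M1 M2])
  finally show ?thesis unfolding z_def N_def .
qed

end
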